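(* Let $|\Psi\rangle,|\Psi'\rangle\in\mathbb C^{I_1}\otimes\mathbb C^{I_2}\otimes\mathbb C^{I_3}\otimes\mathbb C^{I_4}$ be nonzero four-partite states. Let $r$ and $r'$ be the ranks of their $(12)(34)$ matrices. Let $(\Psi_u,\Psi_\lambda,\Psi_v)$ and $(\Psi_{u'},\Psi_{\lambda'},\Psi_{v'})$ be their triple-state sets with respect to the bipartition $(12)(34)$. Then $|\Psi\rangle$ and $|\Psi'\rangle$ are SLOCC equivalent if and only if $r=r'$ and there exist invertible matrices $A_1\in\mathbb C^{I_1\times I_1}$, $A_2\in\mathbb C^{I_2\times I_2}$, $A_3\in\mathbb C^{I_3\times I_3}$, $A_4\in\mathbb C^{I_4\times I_4}$ and $P,Q\in\mathbb C^{r\times r}$ such that $$|\Psi_{u'}\rangle=(P\otimes A_1\otimes A_2)|\Psi_u\rangle,\qquad |\Psi_{v'}\rangle=(Q\otimes A_3^*\otimes A_4^* )|\Psi_v\rangle,\qquad (P^{\mathrm T}\otimes Q^{\dagger})|\Psi_{\lambda'}\rangle=|\Psi_\lambda\rangle .$$ Moreover, when these hold, $|\Psi'\rangle=(A_1\otimes A_2\otimes A_3\otimes A_4)|\Psi\rangle$.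
   Context: **SLOCC equivalence.** Two $N$-partite states $|\Psi'\rangle,|\Psi\rangle$ are SLOCC equivalent if $|\Psi'\rangle=A_1\otimes\cdots\otimes A_N|\Psi\rangle$ for invertible matrices $A_j$. **Bipartite states as matrices.** A bipartite state $\sum_{i,j}\psi_{ij}|i\rangle|j\rangle$ is identified with the matrix $(\psi_{ij})$. Then $(X\otimes Y)$ acts as $\psi\mapsto X\psi Y^{\mathrm T}$. **Tripartite states as tuples.** A tuple $(\Gamma_1,\dots,\Gamma_r)$ with $\Gamma_k\in\mathbb C^{m\times n}$ denotes the tripartite state $$\sum_{k}\sum_{i,j}(\Gamma_k)_{ij}|k\rangle|i\rangle|j\rangle\in\mathbb C^r\otimes\mathbb C^m\otimes\mathbb C^n.$$ **The $(12)(34)$ matrix.** For $|\Psi\rangle=\sum\psi_{i_1i_2i_3i_4}|i_1i_2i_3i_4\rangle$, its $(12)(34)$ matrix is the $I_1I_2\times I_3I_4$ matrix $M$ with rows indexed by pairs $(i_1,i_2)$, columns indexed by pairs $(i_3,i_4)$, and entries $M_{(i_1i_2),(i_3i_4)}=\psi_{i_1i_2i_3i_4}$. **Triple-state set.** Take a singular value decomposition $M=U\Lambda V^{\dagger}$ with $U,V$ unitary. Let $r=\operatorname{rank}M$, and let $\lambda_1,\dots,\lambda_r>0$ be the nonzero singular values with corresponding left singular vectors $\vec u_1,\dots,\vec u_r\in\mathbb C^{I_1I_2}$ and right singular vectors $\vec v_1,\dots,\vec v_r\in\mathbb C^{I_3I_4}$. - $\Psi_u=(\Gamma^u_1,\dots,\Gamma^u_r)$,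 where $\Gamma^u_k\in\mathbb C^{I_1\times I_2}$ has $(i_1,i_2)$ entry equal to the $(i_1,i_2)$-indexed component of $\vec u_k$. This is an $r\times I_1\times I_2$ tripartite state. - $\Psi_v=(\Gamma^v_1,\dots,\Gamma^v_r)$, where $\Gamma^v_k\in\mathbb C^{I_3\times I_4}$ has $(i_3,i_4)$ entry equal to the $(i_3,i_4)$-indexed component of $\vec v_k$. This is an $r\times I_3\times I_4$ tripartite state. - $\Psi_\lambda=\operatorname{diag}(\lambda_1,\dots,\lambda_r)$, an $r\times r$ bipartite state. The triple-state set is $(\Psi_u,\Psi_\lambda,\Psi_v)$. It is defined relative to a fixed choice of SVD; the statement holds for any such choice. **Notation.** $A^*$ denotes the entrywise complex conjugate and $A^\dagger=(A^* )^{\mathrm T}$. *)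

theory Defs
  imports "Jordan_Normal_Form.DL_Rank"
begin

text \<open>Four-partite states in C^I1 (x) C^I2 (x) C^I3 (x) C^I4 are coefficient functions
  psi i1 i2 i3 i4 (only values with i_k < I_k matter); tripartite states in
  C^r (x) C^m (x) C^n are functions Gamma k i j (k < r, i < m, j < n);
  bipartite states are matrices.\<close>

definition state_eq4 :: "nat \<Rightarrow> nat \<Rightarrow> nat \<Rightarrow> nat \<Rightarrow>
    (nat \<Rightarrow> nat \<Rightarrow> nat \<Rightarrow> nat \<Rightarrow> complex) \<Rightarrow> (nat \<Rightarrow> nat \<Rightarrow> nat \<Rightarrow> nat \<Rightarrow> complex) \<Rightarrow> bool" where
  "state_eq4 I1 I2 I3 I4 \<phi> \<psi> \<longleftrightarrow>
     (\<forall>i1<I1. \<forall>i2<I2. \<forall>i3<I3. \<forall>i4<I4. \<phi> i1 i2 i3 i4 = \<psi> i1 i2 i3 i4)"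

definition nonzero4 :: "nat \<Rightarrow> nat \<Rightarrow> nat \<Rightarrow> nat \<Rightarrow> (nat \<Rightarrow> nat \<Rightarrow> nat \<Rightarrow> nat \<Rightarrow> complex) \<Rightarrow> bool" where
  "nonzero4 I1 I2 I3 I4 \<psi> \<longleftrightarrow> (\<exists>i1<I1. \<exists>i2<I2. \<exists>i3<I3. \<exists>i4<I4. \<psi> i1 i2 i3 i4 \<noteq> 0)"

definition apply4 :: "complex mat \<Rightarrow> complex mat \<Rightarrow> complex mat \<Rightarrow> complex mat \<Rightarrow>
    (nat \<Rightarrow> nat \<Rightarrow> nat \<Rightarrow> nat \<Rightarrow> complex) \<Rightarrow> (nat \<Rightarrow> nat \<Rightarrow> nat \<Rightarrow> nat \<Rightarrow> complex)" where
  "apply4 A1 A2 A3 A4 \<psi> = (\<lambda>i1 i2 i3 i4.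
     \<Sum>j1<dim_col A1. \<Sum>j2<dim_col A2. \<Sum>j3<dim_col A3. \<Sum>j4<dim_col A4.
       A1 $$ (i1, j1) * A2 $$ (i2, j2) * A3 $$ (i3, j3) * A4 $$ (i4, j4) * \<psi> j1 j2 j3 j4)"

definition SLOCC_equiv4 :: "nat \<Rightarrow> nat \<Rightarrow> nat \<Rightarrow> nat \<Rightarrow>
    (nat \<Rightarrow> nat \<Rightarrow> nat \<Rightarrow> nat \<Rightarrow> complex) \<Rightarrow> (nat \<Rightarrow> nat \<Rightarrow> nat \<Rightarrow> nat \<Rightarrow> complex) \<Rightarrow> bool" where
  "SLOCC_equiv4 I1 I2 I3 I4 \<psi>' \<psi> \<longleftrightarrow>
     (\<exists>A1 A2 A3 A4.
        A1 \<in> carrier_mat I1 I1 \<and> invertible_mat A1 \<and>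
        A2 \<in> carrier_mat I2 I2 \<and> invertible_mat A2 \<and>
        A3 \<in> carrier_mat I3 I3 \<and> invertible_mat A3 \<and>
        A4 \<in> carrier_mat I4 I4 \<and> invertible_mat A4 \<and>
        state_eq4 I1 I2 I3 I4 \<psi>' (apply4 A1 A2 A3 A4 \<psi>))"

definition mat1234 :: "nat \<Rightarrow> nat \<Rightarrow> nat \<Rightarrow> nat \<Rightarrow> (nat \<Rightarrow> nat \<Rightarrow> nat \<Rightarrow> nat \<Rightarrow> complex) \<Rightarrow> complex mat" where
  "mat1234 I1 I2 I3 I4 \<psi> =
     mat (I1 * I2) (I3 * I4) (\<lambda>(r, c). \<psi> (r div I2) (r mod I2) (c div I4) (c mod I4))"

definition conj_mat :: "complex mat \<Rightarrow> complex mat" where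
  "conj_mat A = map_mat cnj A"

definition adjoint :: "complex mat \<Rightarrow> complex mat" where
  "adjoint A = transpose_mat (conj_mat A)"

definition unitary :: "nat \<Rightarrow> complex mat \<Rightarrow> bool" where
  "unitary n U \<longleftrightarrow> U \<in> carrier_mat n n \<and> U * adjoint U = 1\<^sub>m n \<and> adjoint U * U = 1\<^sub>m n"

text \<open>A singular value decomposition M = U Lambda V^dagger with U, V unitary, where the
  nonzero singular values lam 0, ..., lam (r-1) > 0 sit at diagonal positions 0..r-1
  and all other entries of Lambda are zero (any SVD can be so arranged by relabelling).\<close>
definition is_svd :: "complex mat \<Rightarrow> complex mat \<Rightarrow> complex mat \<Rightarrow> nat \<Rightarrow> (nat \<Rightarrow> real) \<Rightarrow> bool" where
  "is_svd M U V r lam \<longleftrightarrow>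
     unitary (dim_row M) U \<and> unitary (dim_col M) V \<and>
     r \<le> dim_row M \<and> r \<le> dim_col M \<and> (\<forall>k<r. lam k > 0) \<and>
     M = U * mat (dim_row M) (dim_col M)
              (\<lambda>(i, j). if i = j \<and> i < r then complex_of_real (lam i) else 0) * adjoint V"

definition psi_u :: "nat \<Rightarrow> complex mat \<Rightarrow> (nat \<Rightarrow> nat \<Rightarrow> nat \<Rightarrow> complex)" where
  "psi_u I2 U = (\<lambda>k i1 i2. U $$ (i1 * I2 + i2, k))"

definition psi_v :: "nat \<Rightarrow> complex mat \<Rightarrow> (nat \<Rightarrow> nat \<Rightarrow> nat \<Rightarrow> complex)" where
  "psi_v I4 V = (\<lambda>k i3 i4. V $$ (i3 * I4 + i4, k))"

definition psi_lam :: "nat \<Rightarrow> (nat \<Rightarrow> real) \<Rightarrow> complex mat" where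
  "psi_lam r lam = mat r r (\<lambda>(i, j). if i = j then complex_of_real (lam i) else 0)"

definition state_eq3 :: "nat \<Rightarrow> nat \<Rightarrow> nat \<Rightarrow>
    (nat \<Rightarrow> nat \<Rightarrow> nat \<Rightarrow> complex) \<Rightarrow> (nat \<Rightarrow> nat \<Rightarrow> nat \<Rightarrow> complex) \<Rightarrow> bool" where
  "state_eq3 r m n \<phi> \<psi> \<longleftrightarrow> (\<forall>k<r. \<forall>i<m. \<forall>j<n. \<phi> k i j = \<psi> k i j)"

definition apply3 :: "complex mat \<Rightarrow> complex mat \<Rightarrow> complex mat \<Rightarrow>
    (nat \<Rightarrow> nat \<Rightarrow> nat \<Rightarrow> complex) \<Rightarrow> (nat \<Rightarrow> nat \<Rightarrow> nat \<Rightarrow> complex)" where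
  "apply3 X Y Z \<Gamma> = (\<lambda>k i j.
     \<Sum>k'<dim_col X. \<Sum>i'<dim_col Y. \<Sum>j'<dim_col Z.
       X $$ (k, k') * Y $$ (i, i') * Z $$ (j, j') * \<Gamma> k' i' j')"

definition apply2 :: "complex mat \<Rightarrow> complex mat \<Rightarrow> complex mat \<Rightarrow> complex mat" where
  "apply2 X Y \<psi> = X * \<psi> * transpose_mat Y"

end

theory Submission
  imports Defs
begin


lemma sum_split_mult: "(\<Sum>t<a*b. f t) = (\<Sum>t1<a. \<Sum>t2<b. (f::nat\<Rightarrow>'a::comm_monoid_add) (t1*b+t2))"
proof (induction a)
  case 0 then show ?case by simp
next
  case (Suc a)
  have "(\<Sum>t<Suc a*b. f t) = (\<Sum>t\<in>{0..<a*b+b}. f t)" by (simp add: add.commute atLeast0LessThan)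
  also have "\<dots> = (\<Sum>t\<in>{0..<a*b}. f t) + (\<Sum>t\<in>{a*b..<a*b+b}. f t)"
    by (subst sum.atLeastLessThan_concat[symmetric]) auto
  also have "(\<Sum>t\<in>{a*b..<a*b+b}. f t) = (\<Sum>t\<in>{0..<b}. f (t + a*b))"
    using sum.shift_bounds_nat_ivl[of f 0 "a*b" b] by (simp add: add.commute)
  finally show ?case using Suc by (simp add: add.commute atLeast0LessThan)
qed

lemma mult_entry: "A \<in> carrier_mat a b \<Longrightarrow> B \<in> carrier_mat b c \<Longrightarrow> i < a \<Longrightarrow> j < c \<Longrightarrow>
  (A*B)$$(i,j) = (\<Sum>k<b. A$$(i,k)*B$$(k,j))"
  by (simp add: scalar_prod_def atLeast0LessThan)

lemma divmod_simps: "(i2::nat) < b \<Longrightarrow> (i1*b+i2) div b = i1" "(i2::nat) < b \<Longrightarrow> (i1*b+i2) mod b = i2"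
  by auto

lemma divmod_lt: "(x::nat) < a*b \<Longrightarrow> x div b < a" "(x::nat) < a*b \<Longrightarrow> x mod b < b"
proof -
  assume h: "x < a*b"
  then have "b > 0" by (cases b) auto
  show "x div b < a" using h by (simp add: less_mult_imp_div_less)
  show "x mod b < b" using \<open>b>0\<close> by simp
qed

lemma idx_lt: "(i1::nat) < a \<Longrightarrow> i2 < b \<Longrightarrow> i1*b+i2 < a*b"
proof -
  assume "i1 < a" "i2 < b"
  then have "i1*b+i2 < i1*b + b" by simp
  also have "\<dots> = Suc i1 * b" by simp
  also have "\<dots> \<le> a*b" using mult_le_mono1[OF Suc_leI[OF \<open>i1<a\<close>], of b] by simp
  finally show ?thesis .
qed

definition kr :: "nat \<Rightarrow> nat \<Rightarrow> complex mat \<Rightarrow> complex mat \<Rightarrow> complex mat" where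
  "kr a b A B = mat (a*b) (a*b) (\<lambda>(i,j). A$$(i div b, j div b) * B$$(i mod b, j mod b))"

definition colsr :: "nat \<Rightarrow> nat \<Rightarrow> complex mat \<Rightarrow> complex mat" where
  "colsr n r U = mat n r (\<lambda>(i,j). U$$(i,j))"

lemma kr_carrier[simp]: "kr a b A B \<in> carrier_mat (a*b) (a*b)"
  by (simp add: kr_def)

lemma colsr_carrier[simp]: "colsr n r U \<in> carrier_mat n r"
  by (simp add: colsr_def)

lemma kr_mult: assumes "A \<in> carrier_mat a a" "C \<in> carrier_mat a a" "B \<in> carrier_mat b b" "D \<in> carrier_mat b b"
  shows "kr a b A B * kr a b C D = kr a b (A*C) (B*D)"
proof (rule eq_matI)
  fix i j assume i: "i < dim_row (kr a b (A*C) (B*D))" and j: "j < dim_col (kr a b (A*C) (B*D))"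
  then have i': "i < a*b" and j': "j < a*b" by (auto simp: kr_def)
  have "(kr a b A B * kr a b C D) $$ (i,j) = (\<Sum>t<a*b. kr a b A B $$ (i,t) * kr a b C D $$ (t,j))"
    using i' j' by (intro mult_entry) auto
  also have "\<dots> = (\<Sum>t1<a. \<Sum>t2<b. kr a b A B $$ (i,t1*b+t2) * kr a b C D $$ (t1*b+t2,j))"
    by (rule sum_split_mult)
  also have "\<dots> = (\<Sum>t1<a. \<Sum>t2<b. (A$$(i div b,t1) * C$$(t1, j div b)) * (B$$(i mod b, t2) * D$$(t2, j mod b)))"
    using i' j' by (intro sum.cong refl) (simp add: kr_def idx_lt mult.assoc mult.left_commute)
  also have "\<dots> = (\<Sum>t1<a. A$$(i div b,t1) * C$$(t1, j div b)) * (\<Sum>t2<b. B$$(i mod b, t2) * D$$(t2, j mod b))"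
    by (simp add: sum_product)
  also have "\<dots> = (A*C)$$(i div b, j div b) * (B*D)$$(i mod b, j mod b)"
    using mult_entry[OF assms(1,2) divmod_lt(1)[OF i'] divmod_lt(1)[OF j']]
      mult_entry[OF assms(3,4) divmod_lt(2)[OF i'] divmod_lt(2)[OF j']] by simp
  also have "\<dots> = kr a b (A*C) (B*D) $$ (i,j)"
    using i' j' by (simp add: kr_def)
  finally show "(kr a b A B * kr a b C D) $$ (i,j) = kr a b (A*C) (B*D) $$ (i,j)" .
qed (auto simp: kr_def)

lemma kr_one: "kr a b (1\<^sub>m a) (1\<^sub>m b) = 1\<^sub>m (a*b)"
proof (rule eq_matI)
  fix i j assume "i < dim_row (1\<^sub>m (a*b))" "j < dim_col (1\<^sub>m (a*b))"
  then have i: "i < a*b" and j: "j < a*b" by auto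
  have "i div b = j div b \<Longrightarrow> i mod b = j mod b \<Longrightarrow> i = j"
    by (metis div_mult_mod_eq)
  then have "(i div b = j div b \<and> i mod b = j mod b) = (i = j)" by blast
  then show "kr a b (1\<^sub>m a) (1\<^sub>m b) $$ (i,j) = 1\<^sub>m (a*b) $$ (i,j)"
    using i j by (auto simp: kr_def divmod_lt)
qed (auto simp: kr_def)

lemma kr_conj: assumes "A \<in> carrier_mat a a" "B \<in> carrier_mat b b"
  shows "conj_mat (kr a b A B) = kr a b (conj_mat A) (conj_mat B)"
  using assms by (intro eq_matI) (auto simp: kr_def conj_mat_def divmod_lt)

lemma conj_carrier[simp]: "conj_mat A \<in> carrier_mat a b \<longleftrightarrow> A \<in> carrier_mat a b"
  by (simp add: conj_mat_def)

lemma adjoint_carrier[simp]: "adjoint A \<in> carrier_mat a b \<longleftrightarrow> A \<in> carrier_mat b a"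
  by (simp add: adjoint_def)

lemma conj_mult: assumes "A \<in> carrier_mat a b" "B \<in> carrier_mat b c"
  shows "conj_mat (A*B) = conj_mat A * conj_mat B"
  using assms by (intro eq_matI) (auto simp: conj_mat_def scalar_prod_def)

lemma adjoint_mult: assumes "A \<in> carrier_mat a b" "B \<in> carrier_mat b c"
  shows "adjoint (A*B) = adjoint B * adjoint A"
  using assms by (simp add: adjoint_def conj_mult transpose_mult[of _ a b])

lemma conj_conj[simp]: "conj_mat (conj_mat A) = A"
  by (intro eq_matI) (auto simp: conj_mat_def)

lemma adjoint_adjoint[simp]: "adjoint (adjoint A) = A"
  by (intro eq_matI) (auto simp: conj_mat_def adjoint_def)

lemma adjoint_transpose[simp]: "adjoint (transpose_mat A) = conj_mat A"
  by (intro eq_matI) (auto simp: conj_mat_def adjoint_def)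

lemma adjoint_conj[simp]: "adjoint (conj_mat A) = transpose_mat A"
  by (intro eq_matI) (auto simp: conj_mat_def adjoint_def)

lemma transpose_adjoint[simp]: "transpose_mat (adjoint A) = conj_mat A"
  by (simp add: adjoint_def)

lemma conj_one[simp]: "conj_mat (1\<^sub>m n) = 1\<^sub>m n"
  by (intro eq_matI) (auto simp: conj_mat_def)

lemma trace_arg: assumes "(X::complex mat) \<in> carrier_mat a b" "Y \<in> carrier_mat b a" "X*Y = 1\<^sub>m a" "Y*X = 1\<^sub>m b"
  shows "a = b"
proof -
  have "(of_nat a::complex) = (\<Sum>i<a. (X*Y)$$(i,i))" using assms(3) by simp
  also have "\<dots> = (\<Sum>i<a. \<Sum>j<b. X$$(i,j)*Y$$(j,i))" by (rule sum.cong[OF refl], rule mult_entry[OF assms(1,2)]) simp_all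
  also have "\<dots> = (\<Sum>j<b. \<Sum>i<a. Y$$(j,i)*X$$(i,j))" by (subst sum.swap) (simp add: mult.commute)
  also have "\<dots> = (\<Sum>j<b. (Y*X)$$(j,j))" by (rule sum.cong[OF refl], rule mult_entry[OF assms(2,1), symmetric]) simp_all
  also have "\<dots> = of_nat b" using assms(4) by simp
  finally show ?thesis by simp
qed

lemma inv_obtain: assumes "A \<in> carrier_mat n n" "invertible_mat A"
  shows "\<exists>B \<in> carrier_mat n n. A*B = 1\<^sub>m n \<and> B*A = 1\<^sub>m n"
proof -
  have "square_mat A \<and> (\<exists>B. inverts_mat A B \<and> inverts_mat B A)"
    using assms(2) unfolding invertible_mat_def .
  then obtain B where i1: "inverts_mat A B" and i2: "inverts_mat B A" by blast
  have AB0: "A*B = 1\<^sub>m (dim_row A)" using i1 unfolding inverts_mat_def .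
  have BA: "B*A = 1\<^sub>m (dim_row B)" using i2 unfolding inverts_mat_def .
  have dA: "dim_row A = n" using assms(1) by simp
  have AB: "A*B = 1\<^sub>m n" using AB0 unfolding dA .
  have "dim_col (A*B) = n" unfolding AB by simp
  then have c: "dim_col B = n" by simp
  have d1: "dim_col (B*A) = dim_row B" unfolding BA by simp
  have d2: "dim_col (B*A) = n" using assms(1) by simp
  have r: "dim_row B = n" using d1[symmetric] d2 by (rule trans)
  have B: "B \<in> carrier_mat n n" by (rule carrier_matI[OF r c])
  have BA': "B*A = 1\<^sub>m n" using BA unfolding r .
  show ?thesis using AB BA' B by blast
qed

lemma inv_intro: assumes "A \<in> carrier_mat n n" "B \<in> carrier_mat n n" "A*B = 1\<^sub>m n" "B*A = 1\<^sub>m n"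
  shows "invertible_mat A"
  using assms unfolding invertible_mat_def inverts_mat_def square_mat.simps by auto



lemma dims_simps[simp]:
  "dim_row (adjoint A) = dim_col A" "dim_col (adjoint A) = dim_row A"
  "dim_row (conj_mat A) = dim_row A" "dim_col (conj_mat A) = dim_col A"
  "dim_row (kr a b B C) = a*b" "dim_col (kr a b B C) = a*b"
  "dim_row (colsr n r U) = n" "dim_col (colsr n r U) = r"
  "dim_row (psi_lam r lam) = r" "dim_col (psi_lam r lam) = r"
  "dim_row (mat1234 I1 I2 I3 I4 \<psi>) = I1*I2" "dim_col (mat1234 I1 I2 I3 I4 \<psi>) = I3*I4"
  by (auto simp: adjoint_def conj_mat_def kr_def colsr_def psi_lam_def mat1234_def)

lemma adjoint_index[simp]: "i < dim_col A \<Longrightarrow> j < dim_row A \<Longrightarrow> adjoint A $$ (i,j) = cnj (A $$ (j,i))"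
  by (simp add: adjoint_def conj_mat_def)

lemma conj_transpose[simp]: "conj_mat (transpose_mat A) = adjoint A"
  by (simp add: adjoint_def conj_mat_def map_mat_transpose)

lemma assoc': "dim_col (A::complex mat) = dim_row B \<Longrightarrow> dim_col B = dim_row C \<Longrightarrow> A*B*C = A*(B*C)"
  by (rule assoc_mult_mat[of A "dim_row A" "dim_col A" B "dim_col B" C "dim_col C"]) (auto intro!: carrier_matI)

lemma cancel: assumes "(B::complex mat)*A = 1\<^sub>m k" "dim_col B = dim_row A" "dim_col A = dim_row W"
  shows "B*(A*W) = W"
proof -
  have "B*(A*W) = (B*A)*W" using assms(2,3) by (simp add: assoc')
  also have "\<dots> = 1\<^sub>m k * W" using assms(1) by simp
  also have "dim_row W = k" using arg_cong[OF assms(1), of dim_col] assms(3) by simp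
  then have "1\<^sub>m k * W = W" by simp
  finally show ?thesis .
qed

lemma conj_mult': "dim_col (A::complex mat) = dim_row B \<Longrightarrow> conj_mat (A*B) = conj_mat A * conj_mat B"
  by (rule conj_mult[of A "dim_row A" "dim_col A" B "dim_col B"]) (auto intro!: carrier_matI)

lemma adjoint_mult': "dim_col (A::complex mat) = dim_row B \<Longrightarrow> adjoint (A*B) = adjoint B * adjoint A"
  by (rule adjoint_mult[of A "dim_row A" "dim_col A" B "dim_col B"]) (auto intro!: carrier_matI)

lemma transpose_mult': "dim_col A = dim_row B \<Longrightarrow> transpose_mat (A*B) = transpose_mat B * transpose_mat (A::complex mat)"
  by (rule transpose_mult[of A "dim_row A" "dim_col A" B "dim_col B"]) (auto intro!: carrier_matI)

lemma psi_lam_carrier[simp]: "psi_lam r lam \<in> carrier_mat r r"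
  by (simp add: psi_lam_def)

lemma psi_lam_adj[simp]: "adjoint (psi_lam r lam) = psi_lam r lam"
  by (intro eq_matI) (auto simp: psi_lam_def)

definition dgi :: "nat \<Rightarrow> (nat \<Rightarrow> real) \<Rightarrow> complex mat" where
  "dgi r lam = mat r r (\<lambda>(i,j). if i = j then complex_of_real (1 / lam i) else 0)"

lemma dgi_dims[simp]: "dim_row (dgi r lam) = r" "dim_col (dgi r lam) = r"
  by (auto simp: dgi_def)

lemma dgi_carrier[simp]: "dgi r lam \<in> carrier_mat r r"
  by (simp add: dgi_def)

lemma psi_lam_inv: assumes "\<forall>k<r. lam k > 0" shows "psi_lam r lam * dgi r lam = 1\<^sub>m r"
proof (rule eq_matI)
  fix i j assume "i < dim_row (1\<^sub>m r)" "j < dim_col (1\<^sub>m r)"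
  then have i: "i < r" and j: "j < r" by auto
  have "(psi_lam r lam * dgi r lam) $$ (i,j) = (\<Sum>s<r. psi_lam r lam $$ (i,s) * dgi r lam $$ (s,j))"
    using i j by (intro mult_entry) (auto intro!: carrier_matI)
  also have "\<dots> = (\<Sum>s<r. if i = s then complex_of_real (lam i) * dgi r lam $$ (i,j) else 0)"
    using i by (intro sum.cong refl) (auto simp: psi_lam_def)
  also have "\<dots> = complex_of_real (lam i) * dgi r lam $$ (i,j)" using i by simp
  also have "\<dots> = 1\<^sub>m r $$ (i,j)" using i j assms by (auto simp: dgi_def)
  finally show "(psi_lam r lam * dgi r lam) $$ (i,j) = 1\<^sub>m r $$ (i,j)" .
qed auto

lemma svd_unpack:
  assumes svd: "is_svd M U V r lam" and Mc: "M \<in> carrier_mat n m"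
  shows "unitary n U \<and> unitary m V \<and> r \<le> n \<and> r \<le> m \<and> (\<forall>k<r. lam k > 0) \<and>
     M = U * mat n m (\<lambda>(i, j). if i = j \<and> i < r then complex_of_real (lam i) else 0) * adjoint V"
proof -
  have d1: "dim_row M = n" using Mc by (rule carrier_matD)
  have d2: "dim_col M = m" using Mc by (rule carrier_matD)
  show ?thesis using svd unfolding is_svd_def d1 d2 .
qed

lemma orth_cols: assumes uU: "unitary n U" and rn: "r \<le> n"
  shows "adjoint (colsr n r U) * colsr n r U = 1\<^sub>m r"
proof (rule eq_matI)
  from uU have Uc: "U \<in> carrier_mat n n" and UU: "adjoint U * U = 1\<^sub>m n" unfolding unitary_def by auto
  fix i j assume "i < dim_row (1\<^sub>m r)" "j < dim_col (1\<^sub>m r)"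
  then have i: "i < r" and j: "j < r" by auto
  have "(adjoint (colsr n r U) * colsr n r U) $$ (i,j) = (\<Sum>s<n. adjoint (colsr n r U) $$ (i,s) * colsr n r U $$ (s,j))"
    using i j by (intro mult_entry) (auto intro!: carrier_matI)
  also have "\<dots> = (\<Sum>s<n. adjoint U $$ (i,s) * U $$ (s,j))"
    using i j rn Uc by (intro sum.cong refl) (auto simp: colsr_def)
  also have "\<dots> = (adjoint U * U) $$ (i,j)"
    using i j rn Uc by (intro mult_entry[of "adjoint U" n n U n, symmetric]) auto
  also have "\<dots> = 1\<^sub>m r $$ (i,j)" using i j rn by (simp add: UU)
  finally show "(adjoint (colsr n r U) * colsr n r U) $$ (i,j) = 1\<^sub>m r $$ (i,j)" .
qed auto

lemma svd_decomp:
  assumes Uc: "U \<in> carrier_mat n n" and Vc: "V \<in> carrier_mat m m" and rn: "r \<le> n" and rm: "r \<le> m"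
  shows "U * mat n m (\<lambda>(i, j). if i = j \<and> i < r then complex_of_real (lam i) else 0) * adjoint V
     = colsr n r U * psi_lam r lam * adjoint (colsr m r V)"
proof (rule eq_matI)
  define Lb where "Lb = mat n m (\<lambda>(i, j). if i = j \<and> i < r then complex_of_real (lam i) else 0)"
  fix x y assume "x < dim_row (colsr n r U * psi_lam r lam * adjoint (colsr m r V))"
    "y < dim_col (colsr n r U * psi_lam r lam * adjoint (colsr m r V))"
  then have x: "x < n" and y: "y < m" by auto
  have Lbc: "Lb \<in> carrier_mat n m" by (simp add: Lb_def)
  have ULb: "\<And>c. c < m \<Longrightarrow> (U * Lb) $$ (x,c) = (if c < r then U $$ (x,c) * complex_of_real (lam c) else 0)"
  proof -
    fix c assume c: "c < m"
    have "(U * Lb) $$ (x,c) = (\<Sum>s<n. U $$ (x,s) * Lb $$ (s,c))"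
      using x c Uc Lbc by (intro mult_entry) auto
    also have "\<dots> = (\<Sum>s<n. if s = c then (if c < r then U $$ (x,c) * complex_of_real (lam c) else 0) else 0)"
      using c by (intro sum.cong refl) (auto simp: Lb_def)
    also have "\<dots> = (if c < r then U $$ (x,c) * complex_of_real (lam c) else 0)"
      using rn by auto
    finally show "(U * Lb) $$ (x,c) = (if c < r then U $$ (x,c) * complex_of_real (lam c) else 0)" .
  qed
  have "(U * Lb * adjoint V) $$ (x,y) = (\<Sum>c<m. (U*Lb) $$ (x,c) * adjoint V $$ (c,y))"
    using x y Uc Lbc Vc by (intro mult_entry) auto
  also have "\<dots> = (\<Sum>c<m. if c < r then U $$ (x,c) * complex_of_real (lam c) * cnj (V $$ (y,c)) else 0)"
    using x y Vc by (intro sum.cong refl) (auto simp: ULb)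
  also have "\<dots> = (\<Sum>c\<in>{..<m} \<inter> {c. c < r}. U $$ (x,c) * complex_of_real (lam c) * cnj (V $$ (y,c)))"
    by (simp add: sum.inter_restrict)
  also have "{..<m} \<inter> {c. c < r} = {..<r}" using rm by auto
  also have "(\<Sum>c<r. U $$ (x,c) * complex_of_real (lam c) * cnj (V $$ (y,c))) =
     (\<Sum>c<r. (colsr n r U * psi_lam r lam) $$ (x,c) * adjoint (colsr m r V) $$ (c,y))"
  proof (intro sum.cong refl)
    fix c assume "c \<in> {..<r}"
    then have c: "c < r" by simp
    have "(colsr n r U * psi_lam r lam) $$ (x,c) = (\<Sum>s<r. colsr n r U $$ (x,s) * psi_lam r lam $$ (s,c))"
      using x c by (intro mult_entry) (auto intro!: carrier_matI)
    also have "\<dots> = (\<Sum>s<r. if s = c then U $$ (x,c) * complex_of_real (lam c) else 0)"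
      using x c by (intro sum.cong refl) (auto simp: colsr_def psi_lam_def)
    also have "\<dots> = U $$ (x,c) * complex_of_real (lam c)" using c by simp
    finally show "U $$ (x,c) * complex_of_real (lam c) * cnj (V $$ (y,c)) =
       (colsr n r U * psi_lam r lam) $$ (x,c) * adjoint (colsr m r V) $$ (c,y)"
      using c y by (simp add: colsr_def)
  qed
  also have "\<dots> = (colsr n r U * psi_lam r lam * adjoint (colsr m r V)) $$ (x,y)"
    using x y by (intro mult_entry[symmetric]) (auto intro!: carrier_matI)
  finally show "(U * mat n m (\<lambda>(i, j). if i = j \<and> i < r then complex_of_real (lam i) else 0) * adjoint V) $$ (x,y)
     = (colsr n r U * psi_lam r lam * adjoint (colsr m r V)) $$ (x,y)" unfolding Lb_def .
qed (use Uc Vc in auto)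



lemma apply4_entry:
  assumes A1: "A1 \<in> carrier_mat I1 I1" and A2: "A2 \<in> carrier_mat I2 I2"
    and A3: "A3 \<in> carrier_mat I3 I3" and A4: "A4 \<in> carrier_mat I4 I4"
    and i: "i1 < I1" "i2 < I2" "i3 < I3" "i4 < I4"
  shows "apply4 A1 A2 A3 A4 \<psi> i1 i2 i3 i4 =
    (kr I1 I2 A1 A2 * mat1234 I1 I2 I3 I4 \<psi> * transpose_mat (kr I3 I4 A3 A4)) $$ (i1*I2+i2, i3*I4+i4)"
proof -
  define K where "K = kr I1 I2 A1 A2"
  define L where "L = kr I3 I4 A3 A4"
  define M where "M = mat1234 I1 I2 I3 I4 \<psi>"
  define x where "x = i1*I2+i2"
  define y where "y = i3*I4+i4"
  have x: "x < I1*I2" unfolding x_def using i by (simp add: idx_lt)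
  have y: "y < I3*I4" unfolding y_def using i by (simp add: idx_lt)
  have Kc: "K \<in> carrier_mat (I1*I2) (I1*I2)" by (simp add: K_def)
  have Lc: "transpose_mat L \<in> carrier_mat (I3*I4) (I3*I4)" by (simp add: L_def)
  have Mc: "M \<in> carrier_mat (I1*I2) (I3*I4)" by (simp add: M_def mat1234_def)
  have "(K*M*transpose_mat L) $$ (x,y) = (\<Sum>c<I3*I4. (K*M) $$ (x,c) * transpose_mat L $$ (c,y))"
    using x y Kc Mc Lc by (intro mult_entry) auto
  also have "\<dots> = (\<Sum>c<I3*I4. (\<Sum>s<I1*I2. K $$ (x,s) * M $$ (s,c)) * transpose_mat L $$ (c,y))"
    using x Kc Mc by (intro sum.cong refl arg_cong2[where f="(*)"] mult_entry) auto
  also have "\<dots> = (\<Sum>c<I3*I4. \<Sum>s<I1*I2. K $$ (x,s) * M $$ (s,c) * transpose_mat L $$ (c,y))"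
    by (simp add: sum_distrib_right)
  also have "\<dots> = (\<Sum>s<I1*I2. \<Sum>c<I3*I4. K $$ (x,s) * M $$ (s,c) * transpose_mat L $$ (c,y))"
    by (rule sum.swap)
  also have "\<dots> = (\<Sum>j1<I1. \<Sum>j2<I2. \<Sum>j3<I3. \<Sum>j4<I4.
       K $$ (x,j1*I2+j2) * M $$ (j1*I2+j2,j3*I4+j4) * transpose_mat L $$ (j3*I4+j4,y))"
    by (simp only: sum_split_mult)
  also have "\<dots> = apply4 A1 A2 A3 A4 \<psi> i1 i2 i3 i4"
    unfolding apply4_def using A1 A2 A3 A4
    apply simp
    apply (intro sum.cong refl)
    using i x y by (simp add: K_def L_def M_def mat1234_def kr_def idx_lt x_def y_def mult.assoc mult.left_commute)
  finally show ?thesis unfolding K_def L_def M_def x_def y_def by simp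
qed

lemma eq4_iff:
  assumes A1: "A1 \<in> carrier_mat I1 I1" and A2: "A2 \<in> carrier_mat I2 I2"
    and A3: "A3 \<in> carrier_mat I3 I3" and A4: "A4 \<in> carrier_mat I4 I4"
  shows "state_eq4 I1 I2 I3 I4 \<psi>' (apply4 A1 A2 A3 A4 \<psi>) \<longleftrightarrow>
    mat1234 I1 I2 I3 I4 \<psi>' = kr I1 I2 A1 A2 * mat1234 I1 I2 I3 I4 \<psi> * transpose_mat (kr I3 I4 A3 A4)"
proof
  assume h: "state_eq4 I1 I2 I3 I4 \<psi>' (apply4 A1 A2 A3 A4 \<psi>)"
  show "mat1234 I1 I2 I3 I4 \<psi>' = kr I1 I2 A1 A2 * mat1234 I1 I2 I3 I4 \<psi> * transpose_mat (kr I3 I4 A3 A4)"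
  proof (rule eq_matI)
    fix x y assume "x < dim_row (kr I1 I2 A1 A2 * mat1234 I1 I2 I3 I4 \<psi> * transpose_mat (kr I3 I4 A3 A4))"
      "y < dim_col (kr I1 I2 A1 A2 * mat1234 I1 I2 I3 I4 \<psi> * transpose_mat (kr I3 I4 A3 A4))"
    then have x: "x < I1*I2" and y: "y < I3*I4" by auto
    have xe: "x div I2 * I2 + x mod I2 = x" and ye: "y div I4 * I4 + y mod I4 = y" by simp_all
    have "mat1234 I1 I2 I3 I4 \<psi>' $$ (x,y) = \<psi>' (x div I2) (x mod I2) (y div I4) (y mod I4)"
      using x y by (simp add: mat1234_def)
    also have "\<dots> = apply4 A1 A2 A3 A4 \<psi> (x div I2) (x mod I2) (y div I4) (y mod I4)"
      using h x y divmod_lt unfolding state_eq4_def by blast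
    also have "\<dots> = (kr I1 I2 A1 A2 * mat1234 I1 I2 I3 I4 \<psi> * transpose_mat (kr I3 I4 A3 A4)) $$ (x,y)"
      using apply4_entry[OF A1 A2 A3 A4 divmod_lt(1)[OF x] divmod_lt(2)[OF x] divmod_lt(1)[OF y] divmod_lt(2)[OF y]]
      unfolding xe ye .
    finally show "mat1234 I1 I2 I3 I4 \<psi>' $$ (x,y) = (kr I1 I2 A1 A2 * mat1234 I1 I2 I3 I4 \<psi> * transpose_mat (kr I3 I4 A3 A4)) $$ (x,y)" .
  qed auto
next
  assume h: "mat1234 I1 I2 I3 I4 \<psi>' = kr I1 I2 A1 A2 * mat1234 I1 I2 I3 I4 \<psi> * transpose_mat (kr I3 I4 A3 A4)"
  show "state_eq4 I1 I2 I3 I4 \<psi>' (apply4 A1 A2 A3 A4 \<psi>)"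
    unfolding state_eq4_def
  proof (intro allI impI)
    fix i1 i2 i3 i4 assume i: "i1 < I1" "i2 < I2" "i3 < I3" "i4 < I4"
    have "\<psi>' i1 i2 i3 i4 = mat1234 I1 I2 I3 I4 \<psi>' $$ (i1*I2+i2, i3*I4+i4)"
      using i by (simp add: mat1234_def idx_lt)
    also have "\<dots> = apply4 A1 A2 A3 A4 \<psi> i1 i2 i3 i4"
      unfolding h by (rule apply4_entry[OF A1 A2 A3 A4 i, symmetric])
    finally show "\<psi>' i1 i2 i3 i4 = apply4 A1 A2 A3 A4 \<psi> i1 i2 i3 i4" .
  qed
qed

lemma apply3_entry:
  assumes P: "P \<in> carrier_mat r r" and Y: "Y \<in> carrier_mat a a" and Z: "Z \<in> carrier_mat b b"
    and k: "k < r" and i: "i < a" and j: "j < b"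
  shows "apply3 P Y Z (\<lambda>k i j. W $$ (i*b+j, k)) k i j =
    (kr a b Y Z * colsr (a*b) r W * transpose_mat P) $$ (i*b+j, k)"
proof -
  define K where "K = kr a b Y Z"
  define x where "x = i*b+j"
  have x: "x < a*b" unfolding x_def using i j by (simp add: idx_lt)
  have Kc: "K \<in> carrier_mat (a*b) (a*b)" by (simp add: K_def)
  have Pc: "transpose_mat P \<in> carrier_mat r r" using P by simp
  have "(K*colsr (a*b) r W*transpose_mat P) $$ (x,k) = (\<Sum>t<r. (K*colsr (a*b) r W) $$ (x,t) * transpose_mat P $$ (t,k))"
    using x k Kc Pc by (intro mult_entry) auto
  also have "\<dots> = (\<Sum>t<r. (\<Sum>s<a*b. K $$ (x,s) * colsr (a*b) r W $$ (s,t)) * transpose_mat P $$ (t,k))"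
    using x Kc by (intro sum.cong refl arg_cong2[where f="(*)"] mult_entry) auto
  also have "\<dots> = (\<Sum>t<r. \<Sum>s<a*b. K $$ (x,s) * colsr (a*b) r W $$ (s,t) * transpose_mat P $$ (t,k))"
    by (simp add: sum_distrib_right)
  also have "\<dots> = (\<Sum>t<r. \<Sum>s1<a. \<Sum>s2<b. K $$ (x,s1*b+s2) * colsr (a*b) r W $$ (s1*b+s2,t) * transpose_mat P $$ (t,k))"
    by (simp only: sum_split_mult)
  also have "\<dots> = apply3 P Y Z (\<lambda>k i j. W $$ (i*b+j, k)) k i j"
    unfolding apply3_def using P Y Z
    apply simp
    apply (intro sum.cong refl)
    using i j k x by (simp add: K_def kr_def colsr_def idx_lt x_def mult.assoc mult.left_commute)
  finally show ?thesis unfolding K_def x_def by simp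
qed

lemma eq3_iff:
  assumes P: "P \<in> carrier_mat r r" and Y: "Y \<in> carrier_mat a a" and Z: "Z \<in> carrier_mat b b"
  shows "state_eq3 r a b (\<lambda>k i j. W' $$ (i*b+j, k)) (apply3 P Y Z (\<lambda>k i j. W $$ (i*b+j, k))) \<longleftrightarrow>
    colsr (a*b) r W' = kr a b Y Z * colsr (a*b) r W * transpose_mat P"
proof
  assume h: "state_eq3 r a b (\<lambda>k i j. W' $$ (i*b+j, k)) (apply3 P Y Z (\<lambda>k i j. W $$ (i*b+j, k)))"
  show "colsr (a*b) r W' = kr a b Y Z * colsr (a*b) r W * transpose_mat P"
  proof (rule eq_matI)
    fix x k assume "x < dim_row (kr a b Y Z * colsr (a*b) r W * transpose_mat P)"
      "k < dim_col (kr a b Y Z * colsr (a*b) r W * transpose_mat P)"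
    then have x: "x < a*b" and k: "k < r" using P by auto
    have xe: "x div b * b + x mod b = x" by simp
    have "colsr (a*b) r W' $$ (x,k) = W' $$ (x div b * b + x mod b, k)"
      using x k by (simp add: colsr_def)
    also have "\<dots> = apply3 P Y Z (\<lambda>k i j. W $$ (i*b+j, k)) k (x div b) (x mod b)"
      using h x k divmod_lt unfolding state_eq3_def by blast
    also have "\<dots> = (kr a b Y Z * colsr (a*b) r W * transpose_mat P) $$ (x,k)"
      using apply3_entry[OF P Y Z k divmod_lt(1)[OF x] divmod_lt(2)[OF x], of W]
      unfolding xe .
    finally show "colsr (a*b) r W' $$ (x,k) = (kr a b Y Z * colsr (a*b) r W * transpose_mat P) $$ (x,k)" .
  qed (use P in auto)
next
  assume h: "colsr (a*b) r W' = kr a b Y Z * colsr (a*b) r W * transpose_mat P"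
  show "state_eq3 r a b (\<lambda>k i j. W' $$ (i*b+j, k)) (apply3 P Y Z (\<lambda>k i j. W $$ (i*b+j, k)))"
    unfolding state_eq3_def
  proof (intro allI impI)
    fix k i j assume k: "k < r" and i: "i < a" and j: "j < b"
    have "W' $$ (i*b+j, k) = colsr (a*b) r W' $$ (i*b+j, k)"
      using i j k by (simp add: colsr_def idx_lt)
    also have "\<dots> = apply3 P Y Z (\<lambda>k i j. W $$ (i*b+j, k)) k i j"
      unfolding h by (rule apply3_entry[OF P Y Z k i j, symmetric])
    finally show "W' $$ (i*b+j, k) = apply3 P Y Z (\<lambda>k i j. W $$ (i*b+j, k)) k i j" .
  qed
qed



lemma coreU:
  fixes Ur Vr La U'r V'r La' La'i K L M M' :: "complex mat"
  assumes Ur: "Ur \<in> carrier_mat n r" and Vr: "Vr \<in> carrier_mat m r" and La: "La \<in> carrier_mat r r"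
    and U'r: "U'r \<in> carrier_mat n r'" and V'r: "V'r \<in> carrier_mat m r'" and La': "La' \<in> carrier_mat r' r'"
    and La'i: "La'i \<in> carrier_mat r' r'"
    and V'o: "adjoint V'r * V'r = 1\<^sub>m r'" and Li: "La' * La'i = 1\<^sub>m r'"
    and K: "K \<in> carrier_mat n n" and L: "L \<in> carrier_mat m m"
    and Meq: "M = Ur * La * adjoint Vr" and M'eq: "M' = U'r * La' * adjoint V'r"
    and KML: "M' = K * M * transpose_mat L"
  shows "\<exists>X \<in> carrier_mat r r'. U'r = K * Ur * X"
proof -
  note d = carrier_matD[OF Ur] carrier_matD[OF Vr] carrier_matD[OF La] carrier_matD[OF U'r]
    carrier_matD[OF V'r] carrier_matD[OF La'] carrier_matD[OF La'i] carrier_matD[OF K] carrier_matD[OF L]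
  define X where "X = La * adjoint Vr * transpose_mat L * V'r * La'i"
  have Xc: "X \<in> carrier_mat r r'" unfolding X_def using d by (intro carrier_matI) simp_all
  have "M' * V'r * La'i = U'r * La' * (adjoint V'r * V'r) * La'i"
    unfolding M'eq using d by (simp add: assoc')
  also have "\<dots> = U'r" using d by (simp add: V'o assoc' Li)
  finally have 1: "U'r = M' * V'r * La'i" by simp
  have 2: "M' * V'r * La'i = K * Ur * X"
    unfolding KML Meq X_def using d by (simp add: assoc')
  show ?thesis using 1 2 Xc by auto
qed

lemma transpose_conj[simp]: "transpose_mat (conj_mat A) = adjoint A"
  by (simp add: adjoint_def)

lemma rev_dir:
  fixes Ur Vr La La' U'r V'r K L M M' P Q :: "complex mat"
  assumes Ur: "Ur \<in> carrier_mat n r" and Vr: "Vr \<in> carrier_mat m r" and La: "La \<in> carrier_mat r r"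
    and La': "La' \<in> carrier_mat r r"
    and K: "K \<in> carrier_mat n n" and L: "L \<in> carrier_mat m m"
    and P: "P \<in> carrier_mat r r" and Q: "Q \<in> carrier_mat r r"
    and Meq: "M = Ur * La * adjoint Vr" and M'eq: "M' = U'r * La' * adjoint V'r"
    and hU: "U'r = K * Ur * transpose_mat P" and hV: "V'r = conj_mat L * Vr * transpose_mat Q"
    and hL: "transpose_mat P * La' * transpose_mat (adjoint Q) = La"
  shows "M' = K * M * transpose_mat L"
proof -
  note d = carrier_matD[OF Ur] carrier_matD[OF Vr] carrier_matD[OF La] carrier_matD[OF La']
    carrier_matD[OF K] carrier_matD[OF L] carrier_matD[OF P] carrier_matD[OF Q]
  have hL': "La = transpose_mat P * La' * conj_mat Q" using hL by simp
  show ?thesis unfolding M'eq hU hV Meq hL' using d by (simp add: assoc' adjoint_mult')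
qed

lemma fwd:
  fixes Ur Vr La Lai U'r V'r La' La'i K Ki L Li M M' :: "complex mat"
  assumes Ur: "Ur \<in> carrier_mat n r" and Vr: "Vr \<in> carrier_mat m r" and La: "La \<in> carrier_mat r r"
    and Lai: "Lai \<in> carrier_mat r r"
    and U'r: "U'r \<in> carrier_mat n r'" and V'r: "V'r \<in> carrier_mat m r'" and La': "La' \<in> carrier_mat r' r'"
    and La'i: "La'i \<in> carrier_mat r' r'"
    and Uo: "adjoint Ur * Ur = 1\<^sub>m r" and Vo: "adjoint Vr * Vr = 1\<^sub>m r"
    and U'o: "adjoint U'r * U'r = 1\<^sub>m r'" and V'o: "adjoint V'r * V'r = 1\<^sub>m r'"
    and Li1: "La * Lai = 1\<^sub>m r" and Li2: "La' * La'i = 1\<^sub>m r'"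
    and Ladj: "adjoint La = La" and La'adj: "adjoint La' = La'"
    and K: "K \<in> carrier_mat n n" and Ki: "Ki \<in> carrier_mat n n" and KKi: "K * Ki = 1\<^sub>m n" and KiK: "Ki * K = 1\<^sub>m n"
    and L: "L \<in> carrier_mat m m" and Li: "Li \<in> carrier_mat m m" and LLi: "L * Li = 1\<^sub>m m" and LiL: "Li * L = 1\<^sub>m m"
    and Meq: "M = Ur * La * adjoint Vr" and M'eq: "M' = U'r * La' * adjoint V'r"
    and KML: "M' = K * M * transpose_mat L"
  shows "r = r' \<and> (\<exists>X\<in>carrier_mat r r'. \<exists>X'\<in>carrier_mat r' r. \<exists>Y\<in>carrier_mat r r'. \<exists>Y'\<in>carrier_mat r' r.
    X*X' = 1\<^sub>m r \<and> X'*X = 1\<^sub>m r' \<and> Y*Y' = 1\<^sub>m r \<and> Y'*Y = 1\<^sub>m r' \<and>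
    U'r = K*Ur*X \<and> V'r = conj_mat L * Vr * Y \<and> X*La'*adjoint Y = La)"
proof -
  note d = carrier_matD[OF Ur] carrier_matD[OF Vr] carrier_matD[OF La] carrier_matD[OF Lai]
    carrier_matD[OF U'r] carrier_matD[OF V'r] carrier_matD[OF La'] carrier_matD[OF La'i]
    carrier_matD[OF K] carrier_matD[OF Ki] carrier_matD[OF L] carrier_matD[OF Li]
  have tLL: "transpose_mat L * transpose_mat Li = 1\<^sub>m m"
    using transpose_mult'[of Li L] LiL d by simp
  have tLiL: "transpose_mat Li * transpose_mat L = 1\<^sub>m m"
    using transpose_mult'[of L Li] LLi d by simp
  have cLiL: "conj_mat Li * conj_mat L = 1\<^sub>m m"
    using conj_mult'[of Li L] LiL d by simp
  have cLLi: "conj_mat L * conj_mat Li = 1\<^sub>m m"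
    using conj_mult'[of L Li] LLi d by simp
  have cKiK: "conj_mat Ki * conj_mat K = 1\<^sub>m n"
    using conj_mult'[of Ki K] KiK d by simp
  have cKKi: "conj_mat K * conj_mat Ki = 1\<^sub>m n"
    using conj_mult'[of K Ki] KKi d by simp
  have dM: "dim_row M = n" "dim_col M = m" unfolding Meq using d by simp_all
  have dM': "dim_row M' = n" "dim_col M' = m" unfolding M'eq using d by simp_all
  note d = d dM dM'
  note canc = cancel[OF KiK] cancel[OF KKi] cancel[OF tLL] cancel[OF tLiL] cancel[OF Uo] cancel[OF U'o]
    cancel[OF cLiL] cancel[OF cLLi] cancel[OF Vo] cancel[OF V'o]
  have MKi: "M = Ki * M' * transpose_mat Li"
    unfolding KML using d by (simp add: assoc' canc tLL)
  obtain X where Xc: "X \<in> carrier_mat r r'" and hX: "U'r = K * Ur * X"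
    using coreU[OF Ur Vr La U'r V'r La' La'i V'o Li2 K L Meq M'eq KML] by blast
  obtain X' where X'c: "X' \<in> carrier_mat r' r" and hX': "Ur = Ki * U'r * X'"
    using coreU[OF U'r V'r La' Ur Vr La Lai Vo Li1 Ki Li M'eq Meq MKi] by blast
  have AM: "adjoint M = Vr * La * adjoint Ur" unfolding Meq using d by (simp add: adjoint_mult' assoc' Ladj)
  have AM': "adjoint M' = V'r * La' * adjoint U'r" unfolding M'eq using d by (simp add: adjoint_mult' assoc' La'adj)
  have AKML: "adjoint M' = conj_mat L * adjoint M * transpose_mat (conj_mat K)"
    unfolding KML using d by (simp add: adjoint_mult' assoc')
  have AMKi: "adjoint M = conj_mat Li * adjoint M' * transpose_mat (conj_mat Ki)"
    unfolding MKi using d by (simp add: adjoint_mult' assoc')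
  have cL: "conj_mat L \<in> carrier_mat m m" and cK: "conj_mat K \<in> carrier_mat n n"
    and cLi: "conj_mat Li \<in> carrier_mat m m" and cKi: "conj_mat Ki \<in> carrier_mat n n" using K L Ki Li by auto
  obtain Y where Yc: "Y \<in> carrier_mat r r'" and hY: "V'r = conj_mat L * Vr * Y"
    using coreU[OF Vr Ur La V'r U'r La' La'i U'o Li2 cL cK AM AM' AKML] by blast
  obtain Y' where Y'c: "Y' \<in> carrier_mat r' r" and hY': "Vr = conj_mat Li * V'r * Y'"
    using coreU[OF V'r U'r La' Vr Ur La Lai Uo Li1 cLi cKi AM' AM AMKi] by blast
  note d2 = d carrier_matD[OF Xc] carrier_matD[OF X'c] carrier_matD[OF Yc] carrier_matD[OF Y'c]
  have "Ki * U'r * X' = Ur * (X * X')" unfolding hX using d2 by (simp add: assoc' canc)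
  then have e1: "Ur = Ur * (X * X')" using hX' by simp
  have "X * X' = adjoint Ur * (Ur * (X * X'))" using d2 by (simp add: canc)
  also have "\<dots> = 1\<^sub>m r" using e1[symmetric] Uo by simp
  finally have XX': "X * X' = 1\<^sub>m r" .
  have "K * Ur * X = U'r * (X' * X)" unfolding hX' using d2 by (simp add: assoc' canc)
  then have e2: "U'r = U'r * (X' * X)" using hX by simp
  have "X' * X = adjoint U'r * (U'r * (X' * X))" using d2 by (simp add: canc)
  also have "\<dots> = 1\<^sub>m r'" using e2[symmetric] U'o by simp
  finally have X'X: "X' * X = 1\<^sub>m r'" .
  have "conj_mat Li * V'r * Y' = Vr * (Y * Y')" unfolding hY using d2 by (simp add: assoc' canc)
  then have e3: "Vr = Vr * (Y * Y')" using hY' by simp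
  have "Y * Y' = adjoint Vr * (Vr * (Y * Y'))" using d2 by (simp add: canc)
  also have "\<dots> = 1\<^sub>m r" using e3[symmetric] Vo by simp
  finally have YY': "Y * Y' = 1\<^sub>m r" .
  have "conj_mat L * Vr * Y = V'r * (Y' * Y)" unfolding hY' using d2 by (simp add: assoc' canc)
  then have e4: "V'r = V'r * (Y' * Y)" using hY by simp
  have "Y' * Y = adjoint V'r * (V'r * (Y' * Y))" using d2 by (simp add: canc)
  also have "\<dots> = 1\<^sub>m r'" using e4[symmetric] V'o by simp
  finally have Y'Y: "Y' * Y = 1\<^sub>m r'" .
  have rr: "r = r'" by (rule trace_arg[OF Xc X'c XX' X'X])
  have E1: "adjoint Ur * (Ki * (M' * (transpose_mat Li * Vr))) = X * La' * adjoint Y"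
    unfolding M'eq hX hY using d2 by (simp add: assoc' adjoint_mult' canc Vo)
  have E2: "adjoint Ur * (Ki * (M' * (transpose_mat Li * Vr))) = La"
    unfolding KML Meq using d2 by (simp add: assoc' adjoint_mult' canc Vo)
  have XLY: "X * La' * adjoint Y = La" using E1 E2 by simp
  show ?thesis using rr Xc X'c Yc Y'c XX' X'X YY' Y'Y hX hY XLY by blast
qed


theorem theorem1:
  fixes I1 I2 I3 I4 r r' :: nat
    and \<psi> \<psi>' :: "nat \<Rightarrow> nat \<Rightarrow> nat \<Rightarrow> nat \<Rightarrow> complex"
    and U V U' V' :: "complex mat"
    and lam lam' :: "nat \<Rightarrow> real"
  assumes "nonzero4 I1 I2 I3 I4 \<psi>" and "nonzero4 I1 I2 I3 I4 \<psi>'"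
    and "r = vec_space.rank (I1 * I2) (mat1234 I1 I2 I3 I4 \<psi>)"
    and "r' = vec_space.rank (I1 * I2) (mat1234 I1 I2 I3 I4 \<psi>')"
    and "is_svd (mat1234 I1 I2 I3 I4 \<psi>) U V r lam"
    and "is_svd (mat1234 I1 I2 I3 I4 \<psi>') U' V' r' lam'"
  shows "(SLOCC_equiv4 I1 I2 I3 I4 \<psi>' \<psi> \<longleftrightarrow>
           r = r' \<and>
           (\<exists>A1 A2 A3 A4 P Q.
              A1 \<in> carrier_mat I1 I1 \<and> invertible_mat A1 \<and>
              A2 \<in> carrier_mat I2 I2 \<and> invertible_mat A2 \<and>
              A3 \<in> carrier_mat I3 I3 \<and> invertible_mat A3 \<and>
              A4 \<in> carrier_mat I4 I4 \<and> invertible_mat A4 \<and>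
              P \<in> carrier_mat r r \<and> invertible_mat P \<and>
              Q \<in> carrier_mat r r \<and> invertible_mat Q \<and>
              state_eq3 r I1 I2 (psi_u I2 U') (apply3 P A1 A2 (psi_u I2 U)) \<and>
              state_eq3 r I3 I4 (psi_v I4 V') (apply3 Q (conj_mat A3) (conj_mat A4) (psi_v I4 V)) \<and>
              apply2 (transpose_mat P) (adjoint Q) (psi_lam r' lam') = psi_lam r lam))
       \<and>
         (\<forall>A1 A2 A3 A4 P Q.
              r = r' \<and>
              A1 \<in> carrier_mat I1 I1 \<and> invertible_mat A1 \<and>
              A2 \<in> carrier_mat I2 I2 \<and> invertible_mat A2 \<and>
              A3 \<in> carrier_mat I3 I3 \<and> invertible_mat A3 \<and>
              A4 \<in> carrier_mat I4 I4 \<and> invertible_mat A4 \<and>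
              P \<in> carrier_mat r r \<and> invertible_mat P \<and>
              Q \<in> carrier_mat r r \<and> invertible_mat Q \<and>
              state_eq3 r I1 I2 (psi_u I2 U') (apply3 P A1 A2 (psi_u I2 U)) \<and>
              state_eq3 r I3 I4 (psi_v I4 V') (apply3 Q (conj_mat A3) (conj_mat A4) (psi_v I4 V)) \<and>
              apply2 (transpose_mat P) (adjoint Q) (psi_lam r' lam') = psi_lam r lam
            \<longrightarrow> state_eq4 I1 I2 I3 I4 \<psi>' (apply4 A1 A2 A3 A4 \<psi>))"
proof -
  note [simp del] = carrier_matD
  have Mc: "mat1234 I1 I2 I3 I4 \<psi> \<in> carrier_mat (I1*I2) (I3*I4)" by (simp add: mat1234_def)
  have M'c: "mat1234 I1 I2 I3 I4 \<psi>' \<in> carrier_mat (I1*I2) (I3*I4)" by (simp add: mat1234_def)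
  have S: "unitary (I1*I2) U \<and> unitary (I3*I4) V \<and> r \<le> I1*I2 \<and> r \<le> I3*I4 \<and> (\<forall>k<r. lam k > 0) \<and>
     mat1234 I1 I2 I3 I4 \<psi> = U * mat (I1*I2) (I3*I4) (\<lambda>(i, j). if i = j \<and> i < r then complex_of_real (lam i) else 0) * adjoint V"
    by (rule svd_unpack[OF assms(5) Mc])
  have S': "unitary (I1*I2) U' \<and> unitary (I3*I4) V' \<and> r' \<le> I1*I2 \<and> r' \<le> I3*I4 \<and> (\<forall>k<r'. lam' k > 0) \<and>
     mat1234 I1 I2 I3 I4 \<psi>' = U' * mat (I1*I2) (I3*I4) (\<lambda>(i, j). if i = j \<and> i < r' then complex_of_real (lam' i) else 0) * adjoint V'"
    by (rule svd_unpack[OF assms(6) M'c])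
  have Uc: "U \<in> carrier_mat (I1*I2) (I1*I2)" and Vc: "V \<in> carrier_mat (I3*I4) (I3*I4)"
    and U'c: "U' \<in> carrier_mat (I1*I2) (I1*I2)" and V'c: "V' \<in> carrier_mat (I3*I4) (I3*I4)"
    using S S' unfolding unitary_def by auto
  have Meq: "mat1234 I1 I2 I3 I4 \<psi> = colsr (I1*I2) r U * psi_lam r lam * adjoint (colsr (I3*I4) r V)"
    using S svd_decomp[OF Uc Vc, of r lam] by simp
  have M'eq: "mat1234 I1 I2 I3 I4 \<psi>' = colsr (I1*I2) r' U' * psi_lam r' lam' * adjoint (colsr (I3*I4) r' V')"
    using S' svd_decomp[OF U'c V'c, of r' lam'] by simp
  have Uo: "adjoint (colsr (I1*I2) r U) * colsr (I1*I2) r U = 1\<^sub>m r" using S orth_cols by blast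
  have Vo: "adjoint (colsr (I3*I4) r V) * colsr (I3*I4) r V = 1\<^sub>m r" using S orth_cols by blast
  have U'o: "adjoint (colsr (I1*I2) r' U') * colsr (I1*I2) r' U' = 1\<^sub>m r'" using S' orth_cols by blast
  have V'o: "adjoint (colsr (I3*I4) r' V') * colsr (I3*I4) r' V' = 1\<^sub>m r'" using S' orth_cols by blast
  have Li1: "psi_lam r lam * dgi r lam = 1\<^sub>m r" using S psi_lam_inv by blast
  have Li2: "psi_lam r' lam' * dgi r' lam' = 1\<^sub>m r'" using S' psi_lam_inv by blast
  have REV: "state_eq4 I1 I2 I3 I4 \<psi>' (apply4 A1 A2 A3 A4 \<psi>)"
    if rr: "r = r'" and A1: "A1 \<in> carrier_mat I1 I1" and A2: "A2 \<in> carrier_mat I2 I2"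
      and A3: "A3 \<in> carrier_mat I3 I3" and A4: "A4 \<in> carrier_mat I4 I4"
      and P: "P \<in> carrier_mat r r" and Q: "Q \<in> carrier_mat r r"
      and hu: "state_eq3 r I1 I2 (psi_u I2 U') (apply3 P A1 A2 (psi_u I2 U))"
      and hv: "state_eq3 r I3 I4 (psi_v I4 V') (apply3 Q (conj_mat A3) (conj_mat A4) (psi_v I4 V))"
      and hl: "apply2 (transpose_mat P) (adjoint Q) (psi_lam r' lam') = psi_lam r lam"
    for A1 A2 A3 A4 P Q
  proof -
    have hU: "colsr (I1*I2) r U' = kr I1 I2 A1 A2 * colsr (I1*I2) r U * transpose_mat P"
      using hu unfolding psi_u_def eq3_iff[OF P A1 A2] .
    have cA3: "conj_mat A3 \<in> carrier_mat I3 I3" and cA4: "conj_mat A4 \<in> carrier_mat I4 I4" using A3 A4 by auto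
    have hV: "colsr (I3*I4) r V' = kr I3 I4 (conj_mat A3) (conj_mat A4) * colsr (I3*I4) r V * transpose_mat Q"
      using hv unfolding psi_v_def eq3_iff[OF Q cA3 cA4] .
    then have hV': "colsr (I3*I4) r V' = conj_mat (kr I3 I4 A3 A4) * colsr (I3*I4) r V * transpose_mat Q"
      using kr_conj[OF A3 A4] by simp
    have hL: "transpose_mat P * psi_lam r lam' * transpose_mat (adjoint Q) = psi_lam r lam"
      using hl rr unfolding apply2_def by simp
    have M'eq2: "mat1234 I1 I2 I3 I4 \<psi>' = colsr (I1*I2) r U' * psi_lam r lam' * adjoint (colsr (I3*I4) r V')"
      using M'eq rr by simp
    have "mat1234 I1 I2 I3 I4 \<psi>' = kr I1 I2 A1 A2 * mat1234 I1 I2 I3 I4 \<psi> * transpose_mat (kr I3 I4 A3 A4)"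
      by (rule rev_dir[OF colsr_carrier colsr_carrier psi_lam_carrier psi_lam_carrier kr_carrier kr_carrier P Q
          Meq M'eq2 hU hV' hL])
    then show ?thesis using eq4_iff[OF A1 A2 A3 A4] by blast
  qed
  have FWD: "r = r' \<and> (\<exists>A1 A2 A3 A4 P Q.
              A1 \<in> carrier_mat I1 I1 \<and> invertible_mat A1 \<and>
              A2 \<in> carrier_mat I2 I2 \<and> invertible_mat A2 \<and>
              A3 \<in> carrier_mat I3 I3 \<and> invertible_mat A3 \<and>
              A4 \<in> carrier_mat I4 I4 \<and> invertible_mat A4 \<and>
              P \<in> carrier_mat r r \<and> invertible_mat P \<and>
              Q \<in> carrier_mat r r \<and> invertible_mat Q \<and>
              state_eq3 r I1 I2 (psi_u I2 U') (apply3 P A1 A2 (psi_u I2 U)) \<and>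
              state_eq3 r I3 I4 (psi_v I4 V') (apply3 Q (conj_mat A3) (conj_mat A4) (psi_v I4 V)) \<and>
              apply2 (transpose_mat P) (adjoint Q) (psi_lam r' lam') = psi_lam r lam)"
    if sl: "SLOCC_equiv4 I1 I2 I3 I4 \<psi>' \<psi>"
  proof -
    from sl obtain A1 A2 A3 A4 where A1: "A1 \<in> carrier_mat I1 I1" and iA1: "invertible_mat A1"
      and A2: "A2 \<in> carrier_mat I2 I2" and iA2: "invertible_mat A2"
      and A3: "A3 \<in> carrier_mat I3 I3" and iA3: "invertible_mat A3"
      and A4: "A4 \<in> carrier_mat I4 I4" and iA4: "invertible_mat A4"
      and st: "state_eq4 I1 I2 I3 I4 \<psi>' (apply4 A1 A2 A3 A4 \<psi>)"
      unfolding SLOCC_equiv4_def by blast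
    obtain B1 where B1: "B1 \<in> carrier_mat I1 I1" "A1 * B1 = 1\<^sub>m I1" "B1 * A1 = 1\<^sub>m I1" using inv_obtain[OF A1 iA1] by blast
    obtain B2 where B2: "B2 \<in> carrier_mat I2 I2" "A2 * B2 = 1\<^sub>m I2" "B2 * A2 = 1\<^sub>m I2" using inv_obtain[OF A2 iA2] by blast
    obtain B3 where B3: "B3 \<in> carrier_mat I3 I3" "A3 * B3 = 1\<^sub>m I3" "B3 * A3 = 1\<^sub>m I3" using inv_obtain[OF A3 iA3] by blast
    obtain B4 where B4: "B4 \<in> carrier_mat I4 I4" "A4 * B4 = 1\<^sub>m I4" "B4 * A4 = 1\<^sub>m I4" using inv_obtain[OF A4 iA4] by blast
    have KKi: "kr I1 I2 A1 A2 * kr I1 I2 B1 B2 = 1\<^sub>m (I1*I2)"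
      using kr_mult[OF A1 B1(1) A2 B2(1)] B1 B2 kr_one by simp
    have KiK: "kr I1 I2 B1 B2 * kr I1 I2 A1 A2 = 1\<^sub>m (I1*I2)"
      using kr_mult[OF B1(1) A1 B2(1) A2] B1 B2 kr_one by simp
    have LLi: "kr I3 I4 A3 A4 * kr I3 I4 B3 B4 = 1\<^sub>m (I3*I4)"
      using kr_mult[OF A3 B3(1) A4 B4(1)] B3 B4 kr_one by simp
    have LiL: "kr I3 I4 B3 B4 * kr I3 I4 A3 A4 = 1\<^sub>m (I3*I4)"
      using kr_mult[OF B3(1) A3 B4(1) A4] B3 B4 kr_one by simp
    have KML: "mat1234 I1 I2 I3 I4 \<psi>' = kr I1 I2 A1 A2 * mat1234 I1 I2 I3 I4 \<psi> * transpose_mat (kr I3 I4 A3 A4)"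
      using st eq4_iff[OF A1 A2 A3 A4] by blast
    have F: "r = r' \<and> (\<exists>X\<in>carrier_mat r r'. \<exists>X'\<in>carrier_mat r' r. \<exists>Y\<in>carrier_mat r r'. \<exists>Y'\<in>carrier_mat r' r.
      X*X' = 1\<^sub>m r \<and> X'*X = 1\<^sub>m r' \<and> Y*Y' = 1\<^sub>m r \<and> Y'*Y = 1\<^sub>m r' \<and>
      colsr (I1*I2) r' U' = kr I1 I2 A1 A2 * colsr (I1*I2) r U * X \<and>
      colsr (I3*I4) r' V' = conj_mat (kr I3 I4 A3 A4) * colsr (I3*I4) r V * Y \<and>
      X * psi_lam r' lam' * adjoint Y = psi_lam r lam)"
      by (rule fwd[OF colsr_carrier colsr_carrier psi_lam_carrier dgi_carrier colsr_carrier colsr_carrier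
          psi_lam_carrier dgi_carrier Uo Vo U'o V'o Li1 Li2 psi_lam_adj psi_lam_adj
          kr_carrier kr_carrier KKi KiK kr_carrier kr_carrier LLi LiL Meq M'eq KML])
    then have rr: "r = r'" by blast
    from F obtain X X' Y Y' where Xc: "X \<in> carrier_mat r r" and X'c: "X' \<in> carrier_mat r r"
      and Yc: "Y \<in> carrier_mat r r" and Y'c: "Y' \<in> carrier_mat r r"
      and XX: "X*X' = 1\<^sub>m r" "X'*X = 1\<^sub>m r" and YY: "Y*Y' = 1\<^sub>m r" "Y'*Y = 1\<^sub>m r"
      and hX: "colsr (I1*I2) r U' = kr I1 I2 A1 A2 * colsr (I1*I2) r U * X"
      and hY: "colsr (I3*I4) r V' = conj_mat (kr I3 I4 A3 A4) * colsr (I3*I4) r V * Y"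
      and hL: "X * psi_lam r lam' * adjoint Y = psi_lam r lam"
      unfolding rr[symmetric] by blast
    define P where "P = transpose_mat X"
    define Q where "Q = transpose_mat Y"
    have Pc: "P \<in> carrier_mat r r" and Qc: "Q \<in> carrier_mat r r" using Xc Yc unfolding P_def Q_def by auto
    have iP: "invertible_mat P"
    proof (rule inv_intro[OF Pc, of "transpose_mat X'"])
      show "transpose_mat X' \<in> carrier_mat r r" using X'c by simp
      show "P * transpose_mat X' = 1\<^sub>m r" unfolding P_def using transpose_mult[OF X'c Xc] XX by simp
      show "transpose_mat X' * P = 1\<^sub>m r" unfolding P_def using transpose_mult[OF Xc X'c] XX by simp
    qed
    have iQ: "invertible_mat Q"
    proof (rule inv_intro[OF Qc, of "transpose_mat Y'"])
      show "transpose_mat Y' \<in> carrier_mat r r" using Y'c by simp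
      show "Q * transpose_mat Y' = 1\<^sub>m r" unfolding Q_def using transpose_mult[OF Y'c Yc] YY by simp
      show "transpose_mat Y' * Q = 1\<^sub>m r" unfolding Q_def using transpose_mult[OF Yc Y'c] YY by simp
    qed
    have cA3: "conj_mat A3 \<in> carrier_mat I3 I3" and cA4: "conj_mat A4 \<in> carrier_mat I4 I4" using A3 A4 by auto
    have su: "state_eq3 r I1 I2 (psi_u I2 U') (apply3 P A1 A2 (psi_u I2 U))"
      unfolding psi_u_def eq3_iff[OF Pc A1 A2] unfolding P_def using hX by simp
    have sv: "state_eq3 r I3 I4 (psi_v I4 V') (apply3 Q (conj_mat A3) (conj_mat A4) (psi_v I4 V))"
      unfolding psi_v_def eq3_iff[OF Qc cA3 cA4] unfolding Q_def using hY kr_conj[OF A3 A4] by simp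
    have sl2: "apply2 (transpose_mat P) (adjoint Q) (psi_lam r' lam') = psi_lam r lam"
      unfolding apply2_def P_def Q_def rr[symmetric] using hL by simp
    show ?thesis using rr A1 iA1 A2 iA2 A3 iA3 A4 iA4 Pc iP Qc iQ su sv sl2 by blast
  qed
  show ?thesis
  proof (rule conjI)
    show "SLOCC_equiv4 I1 I2 I3 I4 \<psi>' \<psi> \<longleftrightarrow> r = r' \<and> (\<exists>A1 A2 A3 A4 P Q.
              A1 \<in> carrier_mat I1 I1 \<and> invertible_mat A1 \<and>
              A2 \<in> carrier_mat I2 I2 \<and> invertible_mat A2 \<and>
              A3 \<in> carrier_mat I3 I3 \<and> invertible_mat A3 \<and>
              A4 \<in> carrier_mat I4 I4 \<and> invertible_mat A4 \<and>
              P \<in> carrier_mat r r \<and> invertible_mat P \<and>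
              Q \<in> carrier_mat r r \<and> invertible_mat Q \<and>
              state_eq3 r I1 I2 (psi_u I2 U') (apply3 P A1 A2 (psi_u I2 U)) \<and>
              state_eq3 r I3 I4 (psi_v I4 V') (apply3 Q (conj_mat A3) (conj_mat A4) (psi_v I4 V)) \<and>
              apply2 (transpose_mat P) (adjoint Q) (psi_lam r' lam') = psi_lam r lam)" (is "?A \<longleftrightarrow> ?B")
    proof
      assume "?A"
      then show "?B" by (rule FWD)
    next
      assume h: "r = r' \<and> (\<exists>A1 A2 A3 A4 P Q.
              A1 \<in> carrier_mat I1 I1 \<and> invertible_mat A1 \<and>
              A2 \<in> carrier_mat I2 I2 \<and> invertible_mat A2 \<and>
              A3 \<in> carrier_mat I3 I3 \<and> invertible_mat A3 \<and>
              A4 \<in> carrier_mat I4 I4 \<and> invertible_mat A4 \<and>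
              P \<in> carrier_mat r r \<and> invertible_mat P \<and>
              Q \<in> carrier_mat r r \<and> invertible_mat Q \<and>
              state_eq3 r I1 I2 (psi_u I2 U') (apply3 P A1 A2 (psi_u I2 U)) \<and>
              state_eq3 r I3 I4 (psi_v I4 V') (apply3 Q (conj_mat A3) (conj_mat A4) (psi_v I4 V)) \<and>
              apply2 (transpose_mat P) (adjoint Q) (psi_lam r' lam') = psi_lam r lam)"
      then obtain A1 A2 A3 A4 P Q where
        rr: "r = r'" and A: "A1 \<in> carrier_mat I1 I1" "invertible_mat A1"
              "A2 \<in> carrier_mat I2 I2" "invertible_mat A2"
              "A3 \<in> carrier_mat I3 I3" "invertible_mat A3"
              "A4 \<in> carrier_mat I4 I4" "invertible_mat A4"
        and PQ: "P \<in> carrier_mat r r" "Q \<in> carrier_mat r r"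
        and hh: "state_eq3 r I1 I2 (psi_u I2 U') (apply3 P A1 A2 (psi_u I2 U))"
              "state_eq3 r I3 I4 (psi_v I4 V') (apply3 Q (conj_mat A3) (conj_mat A4) (psi_v I4 V))"
              "apply2 (transpose_mat P) (adjoint Q) (psi_lam r' lam') = psi_lam r lam"
        by blast
      have "state_eq4 I1 I2 I3 I4 \<psi>' (apply4 A1 A2 A3 A4 \<psi>)"
        by (rule REV[OF rr A(1) A(3) A(5) A(7) PQ hh])
      then show "SLOCC_equiv4 I1 I2 I3 I4 \<psi>' \<psi>" unfolding SLOCC_equiv4_def using A by blast
    qed
  next
    show "\<forall>A1 A2 A3 A4 P Q.
              r = r' \<and>
              A1 \<in> carrier_mat I1 I1 \<and> invertible_mat A1 \<and>
              A2 \<in> carrier_mat I2 I2 \<and> invertible_mat A2 \<and>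
              A3 \<in> carrier_mat I3 I3 \<and> invertible_mat A3 \<and>
              A4 \<in> carrier_mat I4 I4 \<and> invertible_mat A4 \<and>
              P \<in> carrier_mat r r \<and> invertible_mat P \<and>
              Q \<in> carrier_mat r r \<and> invertible_mat Q \<and>
              state_eq3 r I1 I2 (psi_u I2 U') (apply3 P A1 A2 (psi_u I2 U)) \<and>
              state_eq3 r I3 I4 (psi_v I4 V') (apply3 Q (conj_mat A3) (conj_mat A4) (psi_v I4 V)) \<and>
              apply2 (transpose_mat P) (adjoint Q) (psi_lam r' lam') = psi_lam r lam
            \<longrightarrow> state_eq4 I1 I2 I3 I4 \<psi>' (apply4 A1 A2 A3 A4 \<psi>)"
      using REV by blast
  qed
qed


end
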